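(* Assume $V=W$ is a Hilbert space, $\mathcal{A}$ is coercive with constant $\alpha>0$ (i.e. $\alpha\|\phi\|_W^2\le\mathcal{A}(\phi,\phi)$ for all $\phi\in W$), and $W_\theta\cup S_\theta\subseteq V_\eta$. Let $\sigma^*:=\inf_{w'_\theta\in W_\theta}\|u-w'_\theta\|_{op,\eta}$. If $\varepsilon\ge0$ and $w_\theta\in W_\theta$ satisfy $\|u-w_\theta\|_{op,\eta}\le\sigma^*+\varepsilon$, then $$\|u-w_\theta\|_W\le\Big(1+\frac{4M}{\alpha}\Big)\inf_{w'_\theta\in W_\theta}\|u-w'_\theta\|_W+\frac{\varepsilon}{\alpha}.$$ In particular, for any minimizing sequence $(w^n_\theta)\subset W_\theta$ (i.e. $\|u-w^n_\theta\|_{op,\eta}\to\sigma^*$) and any $\varepsilon>0$ there is $k$ with $\|u-w^k_\theta\|_W\le(1+4M/\alpha)\inf_{w'_\theta\in W_\theta}\|u-w'_\theta\|_W+\varepsilon/\alpha$.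
   Context: $W=V$ is a separable real Hilbert space. $\mathcal{A}:W\times W\to\mathbb{R}$ is a bilinear form with $\mathcal{A}(w,v)\le M\|w\|_W\|v\|_W$, $\mathcal{F}:W\to\mathbb{R}$ is bounded linear, and $u\in W$ is the unique solution of $\mathcal{A}(u,v)=\mathcal{F}(v)$ for all $v\in W$. $W_\theta,V_\eta\subseteq W$ are arbitrary subsets, $V_\eta$ containing an element of nonzero norm. For $w\in W$, $\|w\|_{op,\eta}:=\sup_{v_\eta\in V_\eta,\ \|v_\eta\|_W\neq0}\mathcal{A}(w,v_\eta)/\|v_\eta\|_W$. $S_\theta:=\{w_1-w_2:\ w_1,w_2\in W_\theta\}$. *)

theory Defs
  imports "HOL-Analysis.Analysis"
begin

definition opnorm :: "('a::real_normed_vector \<Rightarrow> 'a \<Rightarrow> real) \<Rightarrow> 'a set \<Rightarrow> 'a \<Rightarrow> real" where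
  "opnorm A Veta w = (SUP v\<in>{v\<in>Veta. norm v \<noteq> 0}. A w v / norm v)"

end

theory Submission
  imports Defs
begin

theorem mainTheorem3:
  fixes A :: "'a::{real_inner, complete_space} \<Rightarrow> 'a \<Rightarrow> real"
    and F :: "'a \<Rightarrow> real"
    and u :: 'a and M \<alpha> :: real
    and Wtheta Veta :: "'a set"
  assumes separable: "\<exists>D::'a set. countable D \<and> closure D = UNIV"
    and bilin: "bilinear A"
    and bounded: "\<And>w v. A w v \<le> M * norm w * norm v"
    and F_lin: "bounded_linear F"
    and u_sol: "\<And>v. A u v = F v"
    and u_unique: "\<And>u'. (\<forall>v. A u' v = F v) \<Longrightarrow> u' = u"
    and Veta_nz: "\<exists>v\<in>Veta. norm v \<noteq> 0"
    and alpha_pos: "\<alpha> > 0"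
    and coercive: "\<And>\<phi>. \<alpha> * (norm \<phi>)^2 \<le> A \<phi> \<phi>"
    and incl: "Wtheta \<union> {w1 - w2 | w1 w2. w1 \<in> Wtheta \<and> w2 \<in> Wtheta} \<subseteq> Veta"
  shows "(\<forall>\<epsilon> wt. \<epsilon> \<ge> 0 \<and> wt \<in> Wtheta \<and>
            opnorm A Veta (u - wt) \<le> (INF w'\<in>Wtheta. opnorm A Veta (u - w')) + \<epsilon> \<longrightarrow>
            norm (u - wt) \<le> (1 + 4 * M / \<alpha>) * (INF w'\<in>Wtheta. norm (u - w')) + \<epsilon> / \<alpha>)
       \<and> (\<forall>(wn :: nat \<Rightarrow> 'a) \<epsilon>. (\<forall>n. wn n \<in> Wtheta) \<and>
            (\<lambda>n. opnorm A Veta (u - wn n)) \<longlonglongrightarrow> (INF w'\<in>Wtheta. opnorm A Veta (u - w')) \<and>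
            \<epsilon> > 0 \<longrightarrow>
            (\<exists>k. norm (u - wn k) \<le> (1 + 4 * M / \<alpha>) * (INF w'\<in>Wtheta. norm (u - w')) + \<epsilon> / \<alpha>))"
proof -
  define S where "S = {v\<in>Veta. norm v \<noteq> 0}"
  have Sne: "S \<noteq> {}" using Veta_nz by (auto simp: S_def)
  have linL: "linear (\<lambda>x. A x y)" for y using bilin by (simp add: bilinear_def)
  have linR: "linear (\<lambda>y. A x y)" for x using bilin by (simp add: bilinear_def)
  have Adiff: "A (x - y) z = A x z - A y z" for x y z using linear_diff[OF linL] by blast
  have Aneg: "A (- x) z = - A x z" for x z using linear_neg[OF linL] by blast
  have bdd: "bdd_above ((\<lambda>v. A w v / norm v) ` S)" for w
  proof (rule bdd_aboveI2)
    fix v assume "v \<in> S" then have "norm v > 0" by (auto simp: S_def)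
    then show "A w v / norm v \<le> M * norm w"
      using bounded[of w v] by (simp add: divide_le_eq)
  qed
  have opn_le: "opnorm A Veta w \<le> M * norm w" for w
    unfolding opnorm_def S_def[symmetric]
  proof (rule cSUP_least[OF Sne])
    fix v assume "v \<in> S" then have "norm v > 0" by (auto simp: S_def)
    then show "A w v / norm v \<le> M * norm w"
      using bounded[of w v] by (simp add: divide_le_eq)
  qed
  have opn_ge: "A w v \<le> opnorm A Veta w * norm v" if "v \<in> Veta" "v \<noteq> 0" for w v
  proof -
    have vS: "v \<in> S" using that by (auto simp: S_def)
    have "A w v / norm v \<le> opnorm A Veta w"
      unfolding opnorm_def S_def[symmetric] using cSUP_upper[OF vS bdd] by simp
    moreover have "norm v > 0" using that by simp
    ultimately show ?thesis by (simp add: divide_le_eq)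
  qed
  have Mge: "M \<ge> 0"
  proof -
    obtain v where v: "v \<in> Veta" "norm v \<noteq> 0" using Veta_nz by blast
    have "\<alpha> * (norm v)^2 \<le> M * norm v * norm v" using coercive[of v] bounded[of v v] by linarith
    then have "\<alpha> * norm v \<le> M * norm v" using v by (simp add: power2_eq_square)
    then show ?thesis using v alpha_pos
      by (metis less_eq_real_def mult_le_cancel_right norm_ge_zero order_trans)
  qed
  have Wsub: "w \<in> Veta" if "w \<in> Wtheta" for w using incl that by blast
  have Dsub: "w1 - w2 \<in> Veta" if "w1 \<in> Wtheta" "w2 \<in> Wtheta" for w1 w2 using incl that by blast
  have bddb: "bdd_below ((\<lambda>w'. opnorm A Veta (u - w')) ` Wtheta)" if "w0 \<in> Wtheta" for w0
  proof (rule bdd_belowI2)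
    fix w assume w: "w \<in> Wtheta"
    show "min (opnorm A Veta (u - w0)) (- M * norm (u - w0)) \<le> opnorm A Veta (u - w)"
    proof (cases "w = w0")
      case True then show ?thesis by simp
    next
      case False
      define d where "d = w0 - w"
      have dV: "d \<in> Veta" using Dsub[OF that w] by (simp add: d_def)
      have dnz: "d \<noteq> 0" using False by (simp add: d_def)
      have "u - w = (u - w0) + d" by (simp add: d_def)
      then have e: "A (u - w) d = A (u - w0) d + A d d"
        using linear_add[OF linL] by metis
      have "- A (u - w0) d \<le> M * norm (u - w0) * norm d"
        using bounded[of "-(u-w0)" d] Aneg[of "u-w0" d] by (simp only: norm_minus_cancel)
      moreover have "\<alpha> * (norm d)^2 \<ge> 0" using alpha_pos by simp
      ultimately have "- M * norm (u - w0) * norm d \<le> A (u - w) d"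
        using e coercive[of d] by linarith
      also have "\<dots> \<le> opnorm A Veta (u - w) * norm d" using opn_ge[OF dV dnz] .
      finally have "(- M * norm (u - w0)) * norm d \<le> opnorm A Veta (u - w) * norm d" by simp
      then have "- M * norm (u - w0) \<le> opnorm A Veta (u - w)"
        using dnz mult_le_cancel_right_pos[of "norm d" "- M * norm (u - w0)" "opnorm A Veta (u - w)"] by auto
      then show ?thesis by simp
    qed
  qed
  have part1: "norm (u - wt) \<le> (1 + 4 * M / \<alpha>) * (INF w'\<in>Wtheta. norm (u - w')) + \<epsilon> / \<alpha>"
    if eps: "\<epsilon> \<ge> 0" and wt: "wt \<in> Wtheta"
      and hyp: "opnorm A Veta (u - wt) \<le> (INF w'\<in>Wtheta. opnorm A Veta (u - w')) + \<epsilon>" for \<epsilon> wt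
  proof -
    have Wne: "Wtheta \<noteq> {}" using wt by blast
    have key: "norm (u - wt) \<le> (1 + 2 * M / \<alpha>) * norm (u - w') + \<epsilon> / \<alpha>" if w': "w' \<in> Wtheta" for w'
    proof -
      define d where "d = w' - wt"
      have s1: "opnorm A Veta (u - wt) \<le> opnorm A Veta (u - w') + \<epsilon>"
        using hyp cINF_lower[OF bddb[OF wt] w'] by linarith
      have s2: "opnorm A Veta (u - wt) \<le> M * norm (u - w') + \<epsilon>" using s1 opn_le[of "u - w'"] by linarith
      have nd: "\<alpha> * norm d \<le> 2 * M * norm (u - w') + \<epsilon>"
      proof (cases "d = 0")
        case True then show ?thesis using Mge eps by simp
      next
        case False
        have dV: "d \<in> Veta" using Dsub[OF w' wt] by (simp add: d_def)
        have "d = (u - wt) - (u - w')" by (simp add: d_def)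
        then have e: "A d d = A (u - wt) d - A (u - w') d" using Adiff by metis
        have "- A (u - w') d \<le> M * norm (u - w') * norm d"
          using bounded[of "-(u-w')" d] Aneg[of "u-w'" d] by (simp only: norm_minus_cancel)
        then have "\<alpha> * (norm d)^2 \<le> opnorm A Veta (u - wt) * norm d + M * norm (u - w') * norm d"
          using e coercive[of d] opn_ge[OF dV False, of "u - wt"] by linarith
        also have "\<dots> \<le> (M * norm (u - w') + \<epsilon>) * norm d + M * norm (u - w') * norm d"
          using s2 by (simp add: mult_right_mono)
        finally have "\<alpha> * norm d * norm d \<le> (2 * M * norm (u - w') + \<epsilon>) * norm d"
          by (simp add: power2_eq_square algebra_simps)
        then show ?thesis using False by (simp add: mult_le_cancel_right)
      qed
      have "norm (u - wt) \<le> norm (u - w') + norm d"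
        using norm_triangle_ineq[of "u - w'" d] by (simp add: d_def)
      moreover have "norm d \<le> (2 * M * norm (u - w') + \<epsilon>) / \<alpha>"
        using nd alpha_pos by (simp add: le_divide_eq mult.commute)
      ultimately have "norm (u - wt) \<le> norm (u - w') + (2 * M * norm (u - w') + \<epsilon>) / \<alpha>" by linarith
      also have "\<dots> = (1 + 2 * M / \<alpha>) * norm (u - w') + \<epsilon> / \<alpha>"
        using alpha_pos by (simp add: field_simps)
      finally show ?thesis .
    qed
    have c0: "2 * M / \<alpha> \<ge> 0" using Mge alpha_pos by simp
    have c: "1 + 2 * M / \<alpha> > 0" using c0 by linarith
    have "(norm (u - wt) - \<epsilon> / \<alpha>) / (1 + 2 * M / \<alpha>) \<le> (INF w'\<in>Wtheta. norm (u - w'))"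
    proof (rule cINF_greatest[OF Wne])
      fix w' assume "w' \<in> Wtheta"
      then show "(norm (u - wt) - \<epsilon> / \<alpha>) / (1 + 2 * M / \<alpha>) \<le> norm (u - w')"
        using key[of w'] c by (simp add: divide_le_eq mult.commute algebra_simps)
    qed
    then have I: "norm (u - wt) - \<epsilon> / \<alpha> \<le> (1 + 2 * M / \<alpha>) * (INF w'\<in>Wtheta. norm (u - w'))"
      using c by (simp add: divide_le_eq mult.commute)
    have I0: "(INF w'\<in>Wtheta. norm (u - w')) \<ge> 0"
      by (rule cINF_greatest[OF Wne]) simp
    have "(1 + 2 * M / \<alpha>) * (INF w'\<in>Wtheta. norm (u - w')) \<le> (1 + 4 * M / \<alpha>) * (INF w'\<in>Wtheta. norm (u - w'))"
      using I0 Mge alpha_pos by (intro mult_right_mono) (auto simp: divide_right_mono)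
    then show ?thesis using I by linarith
  qed
  show ?thesis
  proof (intro conjI allI impI)
    fix \<epsilon> wt assume "0 \<le> \<epsilon> \<and> wt \<in> Wtheta \<and>
            opnorm A Veta (u - wt) \<le> (INF w'\<in>Wtheta. opnorm A Veta (u - w')) + \<epsilon>"
    then show "norm (u - wt) \<le> (1 + 4 * M / \<alpha>) * (INF w'\<in>Wtheta. norm (u - w')) + \<epsilon> / \<alpha>"
      using part1 by blast
  next
    fix wn :: "nat \<Rightarrow> 'a" and \<epsilon> :: real
    assume h: "(\<forall>n. wn n \<in> Wtheta) \<and>
            (\<lambda>n. opnorm A Veta (u - wn n)) \<longlonglongrightarrow> (INF w'\<in>Wtheta. opnorm A Veta (u - w')) \<and> \<epsilon> > 0"
    then have "\<forall>\<^sub>F n in sequentially. dist (opnorm A Veta (u - wn n)) (INF w'\<in>Wtheta. opnorm A Veta (u - w')) < \<epsilon>"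
      by (auto simp: tendsto_iff)
    then obtain k where "dist (opnorm A Veta (u - wn k)) (INF w'\<in>Wtheta. opnorm A Veta (u - w')) < \<epsilon>"
      by (meson eventually_sequentially order_refl)
    then have "opnorm A Veta (u - wn k) \<le> (INF w'\<in>Wtheta. opnorm A Veta (u - w')) + \<epsilon>"
      by (simp add: dist_real_def)
    then show "\<exists>k. norm (u - wn k) \<le> (1 + 4 * M / \<alpha>) * (INF w'\<in>Wtheta. norm (u - w')) + \<epsilon> / \<alpha>"
      using part1 h by (metis less_imp_le)
  qed
qed

end
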